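(* Let $n,m\in\mathbb N$ and $K\in\mathcal K^n$. Then $\mathrm{Vol}_{nm}(R^m_{nm}K)=\mathrm{Vol}_n(K)^m$.
   Context: A convex body in $\mathbb R^d$ is a compact convex set with nonempty interior; $\mathcal K^n$ is the class of convex bodies in $\mathbb R^n$. Identify $\mathbb R^{nm}=(\mathbb R^n)^m$, writing $\bar x=(x_1,\dots,x_m)$, $x_i\in\mathbb R^n$. The radial function of a compact set $L$ is $\rho_L(y)=\sup\{\lambda>0:\lambda y\in L\}$. For $p>0$, $R^m_pK$ is the star body in $\mathbb R^{nm}$ with radial function $\rho_{R^m_pK}(\bar\theta)^p=\frac{1}{\mathrm{Vol}_n(K)}\int_K\big(\min_{1\le i\le m}\rho_{K-x}(-\theta_i)\big)^p\,dx$ for $\bar\theta\in\mathbb S^{nm-1}$. *)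

theory Defs
  imports "HOL-Analysis.Analysis"
begin

definition convex_body :: "'a::euclidean_space set \<Rightarrow> bool" where
  "convex_body K \<longleftrightarrow> compact K \<and> convex K \<and> interior K \<noteq> {}"

text \<open>Radial function rho_L(y) = sup {lambda > 0. lambda y in L}, with the convention
  that the supremum of the empty set is 0.  (Only used for y nonzero and L compact,
  where the set is bounded.)\<close>
definition radial_fun :: "'a::real_normed_vector set \<Rightarrow> 'a \<Rightarrow> real" where
  "radial_fun L y =
     (if {t. t > 0 \<and> t *\<^sub>R y \<in> L} = {} then 0
      else Sup {t. t > 0 \<and> t *\<^sub>R y \<in> L})"

text \<open>Radial function of R^m_p K at a point theta of R^{nm} = (R^n)^m (used on the unit sphere).
  Components theta_i = 0 contribute rho_{K-x}(0) = +infinity to the minimum, so they are omitted.\<close>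
definition rho_Rmp :: "real \<Rightarrow> (real^'n) set \<Rightarrow> real^'n^'m \<Rightarrow> real" where
  "rho_Rmp p K \<theta> =
     ((1 / measure lebesgue K) *
       integral K (\<lambda>x. (Min ((\<lambda>i. radial_fun ((\<lambda>z. z - x) ` K) (- (\<theta> $ i)))
                               ` {i. \<theta> $ i \<noteq> 0})) powr p)) powr (1 / p)"

definition Rmp :: "real \<Rightarrow> (real^'n) set \<Rightarrow> (real^'n^'m) set" where
  "Rmp p K = {r *\<^sub>R \<theta> | r \<theta>. norm \<theta> = 1 \<and> 0 \<le> r \<and> r \<le> rho_Rmp p K \<theta>}"

end

theory Submission
  imports Defs
begin

lemma vec_lambda_meas: "(\<lambda>f. \<chi> i. f i) \<in> PiM UNIV (\<lambda>_::'m::finite. (lborel::'a::euclidean_space measure)) \<rightarrow>\<^sub>M borel"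
proof (subst borel_measurable_euclidean_space, intro ballI)
  fix b :: "'a^'m" assume "b \<in> Basis"
  then obtain i u where b: "b = axis i u" "u \<in> Basis" by (auto simp: Basis_vec_def)
  have "(\<lambda>f. f i \<bullet> u) \<in> PiM UNIV (\<lambda>_::'m. (lborel::'a measure)) \<rightarrow>\<^sub>M borel"
    by measurable
  then show "(\<lambda>x. (\<chi> i. x i) \<bullet> b) \<in> borel_measurable (PiM UNIV (\<lambda>_::'m. (lborel::'a measure)))"
    by (simp add: b inner_axis)
qed

lemma lborel_vec:
  "(lborel :: ('a::euclidean_space^'m) measure) = distr (PiM UNIV (\<lambda>_. lborel)) borel (\<lambda>f. \<chi> i. f i)"
proof (rule lborel_eqI)
  have meas: "(\<lambda>f. \<chi> i. f i) \<in> PiM UNIV (\<lambda>_::'m. (lborel::'a measure)) \<rightarrow>\<^sub>M borel"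
    by (rule vec_lambda_meas)
  fix l u :: "'a^'m"
  assume le: "\<And>b. b \<in> Basis \<Longrightarrow> l \<bullet> b \<le> u \<bullet> b"
  have lei: "\<And>i b. b \<in> Basis \<Longrightarrow> l$i \<bullet> b \<le> u$i \<bullet> b"
    using le by (metis axis_in_Basis_iff inner_axis)
  have pre: "(\<lambda>f. \<chi> i. f i) -` box l u \<inter> space (PiM UNIV (\<lambda>_::'m. (lborel::'a measure)))
       = PiE UNIV (\<lambda>i. box (l$i) (u$i))"
    by (auto simp: mem_box Basis_vec_def inner_axis space_PiM PiE_def Pi_def extensional_def)
  interpret product_sigma_finite "\<lambda>_::'m. (lborel::'a measure)" by standard
  have "emeasure (distr (PiM UNIV (\<lambda>_. lborel)) borel (\<lambda>f. \<chi> i. f i)) (box l u)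
      = emeasure (PiM UNIV (\<lambda>_::'m. (lborel::'a measure))) (PiE UNIV (\<lambda>i. box (l$i) (u$i)))"
    by (subst emeasure_distr[OF meas]) (auto simp: pre)
  also have "\<dots> = (\<Prod>i\<in>UNIV. emeasure lborel (box (l$i) (u$i)))"
    by (rule emeasure_PiM) auto
  also have "\<dots> = (\<Prod>i\<in>UNIV. ennreal (\<Prod>b\<in>Basis. (u$i - l$i) \<bullet> b))"
    using lei by (subst emeasure_lborel_box) auto
  also have "\<dots> = ennreal (\<Prod>i\<in>UNIV. \<Prod>b\<in>Basis. (u$i - l$i) \<bullet> b)"
    using lei by (intro prod_ennreal) (auto intro!: prod_nonneg simp: inner_diff_left)
  also have "(\<Prod>i\<in>UNIV. \<Prod>b\<in>Basis. (u$i - l$i) \<bullet> b) = (\<Prod>b\<in>Basis. (u - l) \<bullet> b)"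
  proof -
    have "(\<Prod>b\<in>Basis. (u - l) \<bullet> b) = (\<Prod>i\<in>UNIV. \<Prod>b\<in>(\<Union>v\<in>Basis. {axis i v}). (u - l) \<bullet> b)"
      unfolding Basis_vec_def
      by (rule prod.UNION_disjoint) (auto simp: axis_eq_axis)
    also have "\<dots> = (\<Prod>i\<in>UNIV. \<Prod>v\<in>Basis. (u - l) \<bullet> axis i v)"
      by (intro prod.cong refl, subst prod.UNION_disjoint) (auto simp: axis_eq_axis)
    finally show ?thesis by (simp add: inner_axis)
  qed
  finally show "emeasure (distr (PiM UNIV (\<lambda>_. lborel)) borel (\<lambda>f. \<chi> i. f i)) (box l u) = (\<Prod>b\<in>Basis. (u - l) \<bullet> b)" .
qed simp


lemma emeasure_vec_prod:
  fixes A :: "'a::euclidean_space set"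
  assumes "A \<in> sets borel"
  shows "emeasure lborel {y::'a^'m. \<forall>i. y$i \<in> A} = emeasure lborel A ^ CARD('m)"
proof -
  have meas: "(\<lambda>f. \<chi> i. f i) \<in> PiM UNIV (\<lambda>_::'m. (lborel::'a measure)) \<rightarrow>\<^sub>M borel"
    by (rule vec_lambda_meas)
  interpret product_sigma_finite "\<lambda>_::'m. (lborel::'a measure)" by standard
  have meas2: "{y::'a^'m. \<forall>i. y$i \<in> A} \<in> sets borel"
  proof -
    have "{y::'a^'m. \<forall>i. y$i \<in> A} = (\<Inter>i. (\<lambda>y. y$i) -` A)" by auto
    also have "\<dots> \<in> sets borel" using assms
      by (intro sets.countable_INT) (auto intro!: measurable_sets_borel[OF _ assms] borel_measurable_continuous_onI continuous_intros)
    finally show ?thesis .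
  qed
  have pre: "(\<lambda>f. \<chi> i. f i) -` {y::'a^'m. \<forall>i. y$i \<in> A} \<inter> space (PiM UNIV (\<lambda>_::'m. (lborel::'a measure)))
       = PiE UNIV (\<lambda>i. A)"
    by (auto simp: space_PiM PiE_def Pi_def extensional_def)
  have "emeasure lborel {y::'a^'m. \<forall>i. y$i \<in> A} = emeasure (PiM UNIV (\<lambda>_::'m. (lborel::'a measure))) (PiE UNIV (\<lambda>i. A))"
    by (subst lborel_vec, subst emeasure_distr[OF meas meas2]) (simp only: pre)
  also have "\<dots> = (\<Prod>i\<in>(UNIV::'m set). emeasure lborel A)"
    using emeasure_PiM[of UNIV "\<lambda>_. A"] assms by simp
  finally show ?thesis by simp
qed

lemma ray_char:
  fixes K :: "'a::euclidean_space set"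
  assumes "compact K" "convex K" "x \<in> K" "u \<noteq> 0"
  shows "0 \<le> radial_fun ((\<lambda>z. z - x) ` K) u"
    and "\<And>t. 0 < t \<Longrightarrow> (x + t *\<^sub>R u \<in> K \<longleftrightarrow> t \<le> radial_fun ((\<lambda>z. z - x) ` K) u)"
proof -
  define S where "S = {t. t > 0 \<and> t *\<^sub>R u \<in> (\<lambda>z. z - x) ` K}"
  have mem: "t *\<^sub>R u \<in> (\<lambda>z. z - x) ` K \<longleftrightarrow> x + t *\<^sub>R u \<in> K" for t
    by (auto simp: image_iff) (metis add_diff_cancel_left')
  have S: "S = {t. t > 0 \<and> x + t *\<^sub>R u \<in> K}" by (simp add: S_def mem)
  have rf: "radial_fun ((\<lambda>z. z - x) ` K) u = (if S = {} then 0 else Sup S)"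
    unfolding radial_fun_def S_def by (rule refl)
  obtain B where B: "\<And>y. y \<in> K \<Longrightarrow> norm y \<le> B"
    using compact_imp_bounded[OF assms(1)] by (auto simp: bounded_iff)
  have bd: "t \<le> 2 * B / norm u" if "t \<in> S" for t
  proof -
    from that have t: "t > 0" "x + t *\<^sub>R u \<in> K" by (auto simp: S)
    have "norm (t *\<^sub>R u) = norm ((x + t *\<^sub>R u) - x)" by simp
    also have "\<dots> \<le> norm (x + t *\<^sub>R u) + norm x" by (rule norm_triangle_ineq4)
    also have "\<dots> \<le> 2 * B" using B[OF t(2)] B[OF assms(3)] by simp
    finally have "t * norm u \<le> 2 * B" using t by simp
    then show ?thesis using assms(4) by (simp add: field_simps)
  qed
  have bdd: "bdd_above S" using bd by (auto simp: bdd_above_def)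
  have cl: "closed {t. x + t *\<^sub>R u \<in> K}"
  proof -
    have "closed ((\<lambda>t. x + t *\<^sub>R u) -` K)"
      by (intro closed_vimage compact_imp_closed[OF assms(1)] continuous_intros)
    then show ?thesis by (simp add: vimage_def)
  qed
  show "0 \<le> radial_fun ((\<lambda>z. z - x) ` K) u"
  proof (cases "S = {}")
    case False
    then obtain t where "t \<in> S" by auto
    then have "t \<le> Sup S" using bdd by (simp add: cSup_upper)
    then show ?thesis using \<open>t \<in> S\<close> False by (simp add: rf S)
  qed (simp add: rf)
  fix t :: real assume t: "0 < t"
  show "x + t *\<^sub>R u \<in> K \<longleftrightarrow> t \<le> radial_fun ((\<lambda>z. z - x) ` K) u"
  proof (cases "S = {}")
    case True
    then show ?thesis using t by (auto simp: rf S)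
  next
    case False
    have SupS: "x + Sup S *\<^sub>R u \<in> K"
    proof -
      have "Sup S \<in> closure S" using closure_contains_Sup[OF False bdd] .
      also have "closure S \<subseteq> {t. x + t *\<^sub>R u \<in> K}"
        by (rule closure_minimal) (auto simp: S cl)
      finally show ?thesis by simp
    qed
    have "t \<le> Sup S" if "x + t *\<^sub>R u \<in> K" using that t bdd by (auto simp: S intro!: cSup_upper)
    moreover have "x + t *\<^sub>R u \<in> K" if le: "t \<le> Sup S"
    proof -
      have pos: "Sup S > 0" using t le by linarith
      define a where "a = t / Sup S"
      have a: "0 \<le> a" "a \<le> 1" using t le pos by (auto simp: a_def)
      have "(1 - a) *\<^sub>R x + a *\<^sub>R (x + Sup S *\<^sub>R u) \<in> K"
        using a SupS assms(3) assms(2) by (intro convexD_alt) auto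
      also have "(1 - a) *\<^sub>R x + a *\<^sub>R (x + Sup S *\<^sub>R u) = x + t *\<^sub>R u"
        using pos by (simp add: a_def algebra_simps)
      finally show ?thesis .
    qed
    ultimately show ?thesis using False by (auto simp: rf)
  qed
qed

lemma nonneg_unique:
  fixes a b :: real
  assumes "0 \<le> a" "0 \<le> b" "\<And>t. 0 < t \<Longrightarrow> (t \<le> a \<longleftrightarrow> t \<le> b)"
  shows "a = b"
proof (rule ccontr)
  assume "a \<noteq> b"
  then consider "a < b" | "b < a" by linarith
  then show False
  proof cases
    case 1 then show False using assms(3)[of b] assms(1) by auto
  next
    case 2 then show False using assms(3)[of a] assms(2) by auto
  qed
qed

lemma radial_scale:
  fixes K :: "'a::euclidean_space set"
  assumes "compact K" "convex K" "x \<in> K" "u \<noteq> 0" "s > 0"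
  shows "radial_fun ((\<lambda>z. z - x) ` K) (s *\<^sub>R u) = radial_fun ((\<lambda>z. z - x) ` K) u / s"
proof (rule nonneg_unique)
  have su: "s *\<^sub>R u \<noteq> 0" using assms by simp
  show "0 \<le> radial_fun ((\<lambda>z. z - x) ` K) (s *\<^sub>R u)" using ray_char(1)[OF assms(1-3) su] .
  show "0 \<le> radial_fun ((\<lambda>z. z - x) ` K) u / s" using ray_char(1)[OF assms(1-4)] assms(5) by simp
  fix t :: real assume t: "0 < t"
  have "t \<le> radial_fun ((\<lambda>z. z - x) ` K) (s *\<^sub>R u) \<longleftrightarrow> x + t *\<^sub>R (s *\<^sub>R u) \<in> K"
    using ray_char(2)[OF assms(1-3) su t] by simp
  also have "\<dots> \<longleftrightarrow> x + (t * s) *\<^sub>R u \<in> K" by (simp add: mult.commute)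
  also have "\<dots> \<longleftrightarrow> t * s \<le> radial_fun ((\<lambda>z. z - x) ` K) u"
    using ray_char(2)[OF assms(1-4)] t assms(5) by simp
  also have "\<dots> \<longleftrightarrow> t \<le> radial_fun ((\<lambda>z. z - x) ` K) u / s"
    using assms(5) by (simp add: field_simps)
  finally show "t \<le> radial_fun ((\<lambda>z. z - x) ` K) (s *\<^sub>R u) \<longleftrightarrow> t \<le> radial_fun ((\<lambda>z. z - x) ` K) u / s" .
qed

definition Rq :: "'a::real_vector set \<Rightarrow> 'a \<Rightarrow> 'a \<Rightarrow> ennreal" where
  "Rq K x u = (SUP q\<in>{q\<in>\<rat>. 0 < q}. if x + q *\<^sub>R u \<in> K then ennreal q else 0)"

lemma Rq_eq:
  fixes K :: "'a::euclidean_space set"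
  assumes "compact K" "convex K" "x \<in> K" "u \<noteq> 0"
  shows "Rq K x u = ennreal (radial_fun ((\<lambda>z. z - x) ` K) u)"
proof -
  define \<rho> where "\<rho> = radial_fun ((\<lambda>z. z - x) ` K) u"
  have r0: "0 \<le> \<rho>" using ray_char(1)[OF assms] by (simp add: \<rho>_def)
  have ch: "\<And>q. 0 < q \<Longrightarrow> (x + q *\<^sub>R u \<in> K \<longleftrightarrow> q \<le> \<rho>)" using ray_char(2)[OF assms] by (simp add: \<rho>_def)
  have terms: "(if x + q *\<^sub>R u \<in> K then ennreal q else 0) = (if q \<le> \<rho> then ennreal q else 0)"
    if "q \<in> {q\<in>\<rat>. 0 < q}" for q using ch that by auto
  have "Rq K x u = (SUP q\<in>{q\<in>\<rat>. 0 < q}. if q \<le> \<rho> then ennreal q else 0)"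
    unfolding Rq_def by (rule SUP_cong[OF refl terms])
  also have "\<dots> = ennreal \<rho>"
  proof (rule antisym)
    show "(SUP q\<in>{q\<in>\<rat>. 0 < q}. if q \<le> \<rho> then ennreal q else 0) \<le> ennreal \<rho>"
      by (rule SUP_least) (auto intro: ennreal_leI)
    show "ennreal \<rho> \<le> (SUP q\<in>{q\<in>\<rat>. 0 < q}. if q \<le> \<rho> then ennreal q else 0)"
    proof (subst le_SUP_iff, intro allI impI)
      fix y assume y: "y < ennreal \<rho>"
      then obtain c where c: "y = ennreal c" "0 \<le> c" "c < \<rho>"
        by (metis ennreal_cases ennreal_less_iff ennreal_less_top ennreal_neg less_le_not_le less_trans linorder_not_le not_top_less)
      obtain q where q: "q \<in> \<rat>" "c < q" "q < \<rho>" using Rats_dense_in_real[OF c(3)] by blast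
      show "\<exists>i\<in>{q \<in> \<rat>. 0 < q}. y < (if i \<le> \<rho> then ennreal i else 0)"
        using q c by (intro bexI[of _ q]) (auto intro!: ennreal_lessI)
    qed
  qed
  finally show ?thesis by (simp add: \<rho>_def)
qed

lemma Rq_meas:
  fixes K :: "'a::euclidean_space set"
  assumes "closed K"
  shows "(\<lambda>p. Rq K (fst p) (snd p)) \<in> borel_measurable (borel :: ('a \<times> 'a) measure)"
  unfolding Rq_def
proof (rule borel_measurable_SUP)
  show "countable {q\<in>\<rat>. 0 < (q::real)}" using countable_rat by (rule countable_subset[rotated]) auto
  fix q :: real
  have "closed ((\<lambda>p::'a\<times>'a. fst p + q *\<^sub>R snd p) -` K)"
    by (intro closed_vimage assms continuous_intros)
  then have "{p::'a\<times>'a. fst p + q *\<^sub>R snd p \<in> K} \<in> sets borel"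
    by (simp add: vimage_def borel_closed)
  then show "(\<lambda>p::'a\<times>'a. if fst p + q *\<^sub>R snd p \<in> K then ennreal q else 0) \<in> borel_measurable borel"
    by (intro measurable_If) auto
qed


lemma ennreal_all_nat_top:
  fixes x :: ennreal assumes "\<And>n::nat. ennreal (real n) \<le> x" shows "x = \<infinity>"
proof (cases x)
  case (real r)
  have "\<And>n::nat. real n \<le> r" using assms real by simp
  then have "real (nat \<lceil>r\<rceil> + 1) \<le> r" by blast
  then show ?thesis by linarith
qed simp

lemma emeasure_Ioi_top: "emeasure lborel {0::real<..} = \<infinity>"
proof (rule ennreal_all_nat_top)
  fix n :: nat
  have "ennreal (real n) = emeasure lborel {0<..real n}" by simp
  also have "\<dots> \<le> emeasure lborel {0::real<..}" by (rule emeasure_mono) auto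
  finally show "ennreal (real n) \<le> emeasure lborel {0::real<..}" .
qed

lemma layer_cake1:
  fixes a :: ennreal
  shows "a = (\<integral>\<^sup>+t. indicator {t. 0 < t \<and> ennreal t \<le> a} t \<partial>lborel)"
proof (cases a)
  case (real r)
  have "{t. 0 < t \<and> ennreal t \<le> a} = {0<..r}" using real by (auto simp: ennreal_le_iff)
  then show ?thesis using real by simp
next
  case top
  have "{t. 0 < t \<and> ennreal t \<le> a} = {0<..}" using top by auto
  then show ?thesis using top by (simp add: emeasure_Ioi_top)
qed

lemma nn_integral_scale:
  fixes g :: "'a::euclidean_space \<Rightarrow> ennreal"
  assumes c: "c > 0" and g[measurable]: "g \<in> borel_measurable borel"
  shows "(\<integral>\<^sup>+y. g y \<partial>lborel) = ennreal (c ^ DIM('a)) * (\<integral>\<^sup>+z. g (c *\<^sub>R z) \<partial>lborel)"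
proof -
  have "(\<integral>\<^sup>+y. g y \<partial>lborel) = (\<integral>\<^sup>+y. g y \<partial>(density (distr lborel borel (\<lambda>x. 0 + c *\<^sub>R x)) (\<lambda>_. \<bar>c\<bar> ^ DIM('a))))"
    by (subst lborel_affine[OF order.strict_implies_not_eq[OF c, symmetric], of 0]) (rule refl)
  also have "\<dots> = (\<integral>\<^sup>+z. ennreal (c ^ DIM('a)) * g (c *\<^sub>R z) \<partial>lborel)"
    using c by (subst nn_integral_density; simp add: nn_integral_distr)
  also have "\<dots> = ennreal (c ^ DIM('a)) * (\<integral>\<^sup>+z. g (c *\<^sub>R z) \<partial>lborel)"
    by (rule nn_integral_cmult) simp
  finally show ?thesis .
qed

lemma ln_integral_one:
  fixes a :: real assumes a: "a > 0"
  shows "(\<integral>\<^sup>+t. indicator {a / exp 1 .. a} t * ennreal (1 / t) \<partial>lborel) = 1"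
proof -
  have le: "a / exp 1 \<le> a" using a by (simp add: field_simps)
  have pos: "a / exp 1 > 0" using a by simp
  have "((\<lambda>t. 1 / t) has_integral (ln a - ln (a / exp 1))) {a / exp 1 .. a}"
  proof (rule fundamental_theorem_of_calculus[OF le])
    fix t assume "t \<in> {a / exp 1 .. a}"
    then have "t > 0" using pos by auto
    then show "(ln has_vector_derivative 1 / t) (at t within {a / exp 1..a})"
      by (auto intro!: has_field_derivative_at_within DERIV_ln_divide
               simp: has_real_derivative_iff_has_vector_derivative[symmetric])
  qed
  moreover have "ln a - ln (a / exp 1) = 1" using a by (simp add: ln_div)
  ultimately have hi: "((\<lambda>t. 1 / t) has_integral 1) {a / exp 1 .. a}" by simp
  have "(\<integral>\<^sup>+t. indicator {a / exp 1 .. a} t * ennreal (1 / t) \<partial>lborel)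
      = (\<integral>\<^sup>+t. ennreal (indicator {a / exp 1 .. a} t * (1 / t)) \<partial>lborel)"
    by (intro nn_integral_cong) (auto split: split_indicator)
  also have "\<dots> = ennreal 1"
    by (rule nn_integral_has_integral_lebesgue[OF _ hi]) (use pos in auto)
  finally show ?thesis by simp
qed

lemma homog_volume:
  fixes \<phi> :: "'a::euclidean_space \<Rightarrow> ennreal"
  assumes meas[measurable]: "\<phi> \<in> borel_measurable borel"
    and hom: "\<And>s y. s > 0 \<Longrightarrow> y \<noteq> 0 \<Longrightarrow> \<phi> y = ennreal (s ^ DIM('a)) * \<phi> (s *\<^sub>R y)"
  shows "(\<integral>\<^sup>+y. \<phi> y * indicator {y. 1 \<le> norm y ^ DIM('a) \<and> norm y ^ DIM('a) \<le> exp 1} y \<partial>lborel)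
     = emeasure lborel {y. y \<noteq> 0 \<and> 1 \<le> \<phi> y}"
proof -
  define D where "D = DIM('a)"
  have D: "D > 0" by (simp add: D_def)
  define W where "W = {y::'a. 1 \<le> norm y ^ D \<and> norm y ^ D \<le> exp 1}"
  define L where "L = {y::'a. y \<noteq> 0 \<and> 1 \<le> \<phi> y}"
  have Wm[measurable]: "W \<in> sets borel" unfolding W_def by measurable
  have Lm[measurable]: "L \<in> sets borel" unfolding L_def by measurable
  interpret P: pair_sigma_finite "lborel::'a measure" "lborel::real measure" ..
  have "(\<integral>\<^sup>+y. \<phi> y * indicator W y \<partial>lborel)
      = (\<integral>\<^sup>+y. (\<integral>\<^sup>+t. (if 0 < t \<and> ennreal t \<le> \<phi> y then 1 else 0) * indicator W y \<partial>lborel) \<partial>lborel)"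
  proof (rule nn_integral_cong)
    fix y :: 'a
    have "\<phi> y = (\<integral>\<^sup>+t. indicator {t. 0 < t \<and> ennreal t \<le> \<phi> y} t \<partial>lborel)" by (rule layer_cake1)
    also have "\<dots> = (\<integral>\<^sup>+t. (if 0 < t \<and> ennreal t \<le> \<phi> y then 1 else 0) \<partial>lborel)"
      by (intro nn_integral_cong) (simp add: indicator_def)
    finally show "\<phi> y * indicator W y = (\<integral>\<^sup>+t. (if 0 < t \<and> ennreal t \<le> \<phi> y then 1 else 0) * indicator W y \<partial>lborel)"
      by (simp add: nn_integral_multc)
  qed
  also have "\<dots> = (\<integral>\<^sup>+t. (\<integral>\<^sup>+y. (if 0 < t \<and> ennreal t \<le> \<phi> y then 1 else 0) * indicator W y \<partial>lborel) \<partial>lborel)"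
    by (rule lborel_pair.Fubini'[symmetric]) (unfold case_prod_beta', measurable)
  also have "\<dots> = (\<integral>\<^sup>+t. (\<integral>\<^sup>+z. (if 0 < t then ennreal (1 / t) else 0) * indicator L z *
         (if t \<le> norm z ^ D \<and> norm z ^ D \<le> exp 1 * t then 1 else 0) \<partial>lborel) \<partial>lborel)"
  proof (rule nn_integral_cong)
    fix t :: real
    show "(\<integral>\<^sup>+y. (if 0 < t \<and> ennreal t \<le> \<phi> y then 1 else 0) * indicator W y \<partial>lborel) =
      (\<integral>\<^sup>+z. (if 0 < t then ennreal (1 / t) else 0) * indicator L z *
         (if t \<le> norm z ^ D \<and> norm z ^ D \<le> exp 1 * t then 1 else 0) \<partial>lborel)"
    proof (cases "0 < t")
      case False then show ?thesis by simp
    next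
      case t: True
      define s where "s = root D (1 / t)"
      have s: "s > 0" "s ^ D = 1 / t" using t D by (auto simp: s_def real_root_pow_pos2)
      have pm: "{y. ennreal t \<le> \<phi> y} \<in> sets borel"
        using measurable_sets[OF meas, of "{ennreal t..}"] by (simp add: vimage_def)
      have gm: "(\<lambda>y. (if 0 < t \<and> ennreal t \<le> \<phi> y then 1 else 0::ennreal) * indicator W y) \<in> borel_measurable borel"
      proof -
        have eq: "(\<lambda>y. (if 0 < t \<and> ennreal t \<le> \<phi> y then 1 else 0) * indicator W y) = (indicator ({y. ennreal t \<le> \<phi> y} \<inter> W) :: 'a \<Rightarrow> ennreal)"
          using t by (auto simp: indicator_def fun_eq_iff)
        show ?thesis unfolding eq by (intro borel_measurable_indicator sets.Int pm Wm)
      qed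
      have "(\<integral>\<^sup>+y. (if 0 < t \<and> ennreal t \<le> \<phi> y then 1 else 0) * indicator W y \<partial>lborel)
        = ennreal (s ^ D) * (\<integral>\<^sup>+z. (if 0 < t \<and> ennreal t \<le> \<phi> (s *\<^sub>R z) then 1 else 0) * indicator W (s *\<^sub>R z) \<partial>lborel)"
        unfolding D_def by (rule nn_integral_scale[OF s(1) gm])
      also have "(\<integral>\<^sup>+z. (if 0 < t \<and> ennreal t \<le> \<phi> (s *\<^sub>R z) then 1 else 0) * indicator W (s *\<^sub>R z) \<partial>lborel)
        = (\<integral>\<^sup>+z. indicator L z * (if t \<le> norm z ^ D \<and> norm z ^ D \<le> exp 1 * t then 1 else 0) \<partial>lborel)"
      proof (rule nn_integral_cong)
        fix z :: 'a
        show "(if 0 < t \<and> ennreal t \<le> \<phi> (s *\<^sub>R z) then 1 else 0) * indicator W (s *\<^sub>R z)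
          = indicator L z * (if t \<le> norm z ^ D \<and> norm z ^ D \<le> exp 1 * t then (1::ennreal) else 0)"
        proof (cases "z = 0")
          case True then show ?thesis using D by (simp add: W_def L_def indicator_def power_0_left)
        next
          case z: False
          have h: "\<phi> z = ennreal (1 / t) * \<phi> (s *\<^sub>R z)" using hom[OF s(1) z] s(2) by (simp add: D_def)
          have h2: "\<phi> (s *\<^sub>R z) = ennreal t * \<phi> z"
          proof -
            have e1: "ennreal t * ennreal (1 / t) = 1"
              using t by (simp add: ennreal_mult[symmetric])
            show ?thesis by (simp add: h mult.assoc[symmetric] e1)
          qed
          have c1: "ennreal t \<le> \<phi> (s *\<^sub>R z) \<longleftrightarrow> 1 \<le> \<phi> z"
          proof -
            have "ennreal t \<le> ennreal t * \<phi> z \<longleftrightarrow> ennreal t * 1 \<le> ennreal t * \<phi> z" by simp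
            also have "\<dots> \<longleftrightarrow> 1 \<le> \<phi> z" using t by (subst ennreal_mult_le_mult_iff) auto
            finally show ?thesis by (simp add: h2)
          qed
          have n: "norm (s *\<^sub>R z) ^ D = norm z ^ D / t"
            using s by (simp add: power_mult_distrib)
          have c2: "s *\<^sub>R z \<in> W \<longleftrightarrow> t \<le> norm z ^ D \<and> norm z ^ D \<le> exp 1 * t"
            unfolding W_def mem_Collect_eq n using t by (simp add: field_simps)
          show ?thesis using c1 c2 z t by (simp add: L_def indicator_def)
        qed
      qed
      finally show ?thesis using t s(2)
        by (simp add: nn_integral_cmult[symmetric] mult.assoc)
    qed
  qed
  also have "\<dots> = (\<integral>\<^sup>+z. (\<integral>\<^sup>+t. (if 0 < t then ennreal (1 / t) else 0) * indicator L z *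
         (if t \<le> norm z ^ D \<and> norm z ^ D \<le> exp 1 * t then 1 else 0) \<partial>lborel) \<partial>lborel)"
    by (rule lborel_pair.Fubini') (unfold case_prod_beta', measurable)
  also have "\<dots> = (\<integral>\<^sup>+z. indicator L z \<partial>lborel)"
  proof (rule nn_integral_cong)
    fix z :: 'a
    show "(\<integral>\<^sup>+t. (if 0 < t then ennreal (1 / t) else 0) * indicator L z *
         (if t \<le> norm z ^ D \<and> norm z ^ D \<le> exp 1 * t then 1 else 0) \<partial>lborel) = indicator L z"
    proof (cases "z \<in> L")
      case False then show ?thesis by simp
    next
      case True
      then have a: "norm z ^ D > 0" by (simp add: L_def)
      have "(\<integral>\<^sup>+t. (if 0 < t then ennreal (1 / t) else 0) * indicator L z *
         (if t \<le> norm z ^ D \<and> norm z ^ D \<le> exp 1 * t then 1 else 0) \<partial>lborel)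
        = (\<integral>\<^sup>+t. indicator {norm z ^ D / exp 1 .. norm z ^ D} t * ennreal (1 / t) \<partial>lborel)"
      proof (rule nn_integral_cong)
        fix t :: real
        have "t \<in> {norm z ^ D / exp 1 .. norm z ^ D} \<longleftrightarrow> t \<le> norm z ^ D \<and> norm z ^ D \<le> exp 1 * t"
          by (auto simp: field_simps)
        moreover have "t \<in> {norm z ^ D / exp 1 .. norm z ^ D} \<Longrightarrow> 0 < t"
          using a by (auto intro: less_le_trans[rotated])
        ultimately show "(if 0 < t then ennreal (1 / t) else 0) * indicator L z *
         (if t \<le> norm z ^ D \<and> norm z ^ D \<le> exp 1 * t then 1 else 0)
          = indicator {norm z ^ D / exp 1 .. norm z ^ D} t * ennreal (1 / t)"
          using True by (auto simp: indicator_def)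
      qed
      also have "\<dots> = 1" by (rule ln_integral_one[OF a])
      finally show ?thesis using True by simp
    qed
  qed
  also have "\<dots> = emeasure lborel L" by simp
  finally show ?thesis by (simp add: W_def L_def D_def)
qed


lemma INF_finite_attained:
  fixes g :: "'i::finite \<Rightarrow> 'b::complete_linorder"
  shows "\<exists>i. (INF i. g i) = g i"
proof -
  have e: "Inf (range g) = Min (range g)" by (rule Min_Inf[symmetric]) auto
  have m: "Min (range g) \<in> range g" by (rule Min_in) auto
  from m obtain i where "Min (range g) = g i" by blast
  with e show ?thesis by metis
qed

lemma INF_cmult_ennreal:
  fixes g :: "'i::finite \<Rightarrow> ennreal"
  shows "(INF i. c * g i) = c * (INF i. g i)"
proof (rule antisym)
  obtain i0 where i0: "(INF i. g i) = g i0" using INF_finite_attained by blast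
  show "(INF i. c * g i) \<le> c * (INF i. g i)" unfolding i0 by (rule INF_lower) simp
  show "c * (INF i. g i) \<le> (INF i. c * g i)"
    by (rule INF_greatest) (auto intro!: mult_left_mono INF_lower)
qed

lemma ennreal_one_le_power_iff:
  fixes B :: ennreal assumes "d > 0"
  shows "1 \<le> B ^ d \<longleftrightarrow> 1 \<le> B"
  by (metis assms less_one linorder_linear linorder_not_le one_le_power
    order_le_neq_trans power_decreasing power_le_one power_one_right zero_le)

definition Psi :: "(real^'n) set \<Rightarrow> real^'n \<Rightarrow> real^'n^'m \<Rightarrow> ennreal" where
  "Psi K x y = (INF i. if y$i = 0 then \<infinity> else Rq K x (- (y$i))) ^ (CARD('n) * CARD('m))"

lemma Psi_meas:
  fixes f :: "'c::euclidean_space \<Rightarrow> real^'n" and g :: "'c \<Rightarrow> real^'n^'m"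
  assumes K: "closed K" and f: "continuous_on UNIV f" and g: "continuous_on UNIV g"
  shows "(\<lambda>p. Psi K (f p) (g p)) \<in> borel_measurable borel"
proof -
  have Ri: "(\<lambda>p. if g p $ i = 0 then \<infinity> else Rq K (f p) (- (g p $ i))) \<in> borel_measurable borel" for i
  proof (rule measurable_If)
    have c: "(\<lambda>p. (f p, - (g p $ i))) \<in> borel_measurable borel"
      by (intro borel_measurable_continuous_onI continuous_intros f g)
    show "(\<lambda>p. Rq K (f p) (- (g p $ i))) \<in> borel_measurable borel"
      using measurable_compose[OF c Rq_meas[OF K]] by simp
    have "closed {p. g p $ i = 0}"
    proof -
      have "closed ((\<lambda>p. g p $ i) -` {0})"
        by (intro closed_vimage closed_singleton) (auto intro!: continuous_intros continuous_on_imp_continuous_within[OF g] simp: continuous_on_eq_continuous_at)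
      then show ?thesis by (simp add: vimage_def)
    qed
    then show "{p \<in> space borel. g p $ i = 0} \<in> sets borel" by (simp add: borel_closed)
  qed simp
  have "(\<lambda>p. INF i. if g p $ i = 0 then \<infinity> else Rq K (f p) (- (g p $ i))) \<in> borel_measurable borel"
    by (rule borel_measurable_INF) (auto intro: Ri)
  then show ?thesis unfolding Psi_def by (rule borel_measurable_power_ennreal)
qed

lemma Psi_hom:
  fixes K :: "(real^'n) set" and y :: "real^'n^'m"
  assumes K: "compact K" "convex K" "x \<in> K" and s: "s > 0"
  shows "Psi K x y = ennreal (s ^ (CARD('n) * CARD('m))) * Psi K x (s *\<^sub>R y)"
proof -
  have "(if y$i = 0 then \<infinity> else Rq K x (- (y$i))) = ennreal s * (if (s *\<^sub>R y)$i = 0 then \<infinity> else Rq K x (- ((s *\<^sub>R y)$i)))" for i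
  proof (cases "y$i = 0")
    case True then show ?thesis using s by (simp add: ennreal_mult_top)
  next
    case False
    then have ne: "- (y$i) \<noteq> 0" by simp
    have "Rq K x (- ((s *\<^sub>R y)$i)) = ennreal (radial_fun ((\<lambda>z. z - x) ` K) (s *\<^sub>R (- (y$i))))"
      using Rq_eq[OF K, of "s *\<^sub>R (- (y$i))"] s False by simp
    also have "\<dots> = ennreal (radial_fun ((\<lambda>z. z - x) ` K) (- (y$i)) / s)"
      using radial_scale[OF K ne s] by simp
    finally have "ennreal s * Rq K x (- ((s *\<^sub>R y)$i)) = ennreal (radial_fun ((\<lambda>z. z - x) ` K) (- (y$i)))"
      using s ray_char(1)[OF K ne] by (simp add: ennreal_mult[symmetric])
    then show ?thesis using False s Rq_eq[OF K ne] by simp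
  qed
  then have "(INF i. if y$i = 0 then \<infinity> else Rq K x (- (y$i))) = ennreal s * (INF i. if (s *\<^sub>R y)$i = 0 then \<infinity> else Rq K x (- ((s *\<^sub>R y)$i)))"
    by (simp add: INF_cmult_ennreal)
  then show ?thesis unfolding Psi_def using s
    by (simp add: power_mult_distrib ennreal_power)
qed

lemma Psi_char:
  fixes K :: "(real^'n) set" and y :: "real^'n^'m"
  assumes K: "compact K" "convex K" "x \<in> K"
  shows "1 \<le> Psi K x y \<longleftrightarrow> (\<forall>i. x - y$i \<in> K)"
proof -
  have d: "CARD('n) * CARD('m) > 0" by simp
  have "1 \<le> Psi K x y \<longleftrightarrow> (\<forall>i. 1 \<le> (if y$i = 0 then \<infinity> else Rq K x (- (y$i))))"
    unfolding Psi_def ennreal_one_le_power_iff[OF d] le_INF_iff by simp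
  also have "\<dots> \<longleftrightarrow> (\<forall>i. x - y$i \<in> K)"
  proof -
    have "1 \<le> (if y$i = 0 then \<infinity> else Rq K x (- (y$i))) \<longleftrightarrow> x - y$i \<in> K" for i
    proof (cases "y$i = 0")
      case True then show ?thesis using K by simp
    next
      case False
      then have ne: "- (y$i) \<noteq> 0" by simp
      have r0: "0 \<le> radial_fun ((\<lambda>z. z - x) ` K) (- (y$i))" using ray_char(1)[OF K ne] .
      have "1 \<le> Rq K x (- (y$i)) \<longleftrightarrow> 1 \<le> radial_fun ((\<lambda>z. z - x) ` K) (- (y$i))"
        unfolding Rq_eq[OF K ne] using ennreal_le_iff[OF r0, of 1] by simp
      also have "\<dots> \<longleftrightarrow> x + 1 *\<^sub>R (- (y$i)) \<in> K" using ray_char(2)[OF K ne, of 1] by simp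
      finally show ?thesis using False by simp
    qed
    then show ?thesis by blast
  qed
  finally show ?thesis .
qed


lemma radial_bound:
  fixes K :: "'a::euclidean_space set"
  assumes K: "compact K" "convex K" "x \<in> K" and u: "u \<noteq> 0" and B: "\<And>y. y \<in> K \<Longrightarrow> norm y \<le> B"
  shows "radial_fun ((\<lambda>z. z - x) ` K) u \<le> 2 * B / norm u"
proof -
  define \<rho> where "\<rho> = radial_fun ((\<lambda>z. z - x) ` K) u"
  have B0: "0 \<le> B" using B[OF K(3)] by (meson norm_ge_zero order_trans)
  show ?thesis
  proof (cases "\<rho> = 0")
    case True then show ?thesis using B0 by (simp add: \<rho>_def)
  next
    case False
    then have pos: "\<rho> > 0" using ray_char(1)[OF K u] by (simp add: \<rho>_def)
    then have mem: "x + \<rho> *\<^sub>R u \<in> K" using ray_char(2)[OF K u, of \<rho>] by (simp add: \<rho>_def)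
    have "norm (\<rho> *\<^sub>R u) = norm ((x + \<rho> *\<^sub>R u) - x)" by simp
    also have "\<dots> \<le> norm (x + \<rho> *\<^sub>R u) + norm x" by (rule norm_triangle_ineq4)
    also have "\<dots> \<le> 2 * B" using B[OF mem] B[OF K(3)] by simp
    finally have "\<rho> * norm u \<le> 2 * B" using pos by simp
    then show ?thesis using u by (simp add: field_simps \<rho>_def[symmetric])
  qed
qed

lemma Min_powr_eq:
  fixes K :: "(real^'n) set" and \<theta> :: "real^'n^'m"
  assumes K: "compact K" "convex K" "x \<in> K" and th: "\<theta> \<noteq> 0"
  shows "ennreal ((Min ((\<lambda>i. radial_fun ((\<lambda>z. z - x) ` K) (- (\<theta> $ i))) ` {i. \<theta> $ i \<noteq> 0}))
            powr real (CARD('n) * CARD('m))) = Psi K x \<theta>"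
proof -
  define A where "A = {i. \<theta> $ i \<noteq> 0}"
  define f where "f i = radial_fun ((\<lambda>z. z - x) ` K) (- (\<theta> $ i))" for i
  define m0 where "m0 = Min (f ` A)"
  define d where "d = CARD('n) * CARD('m)"
  have d: "d > 0" by (simp add: d_def)
  have An: "A \<noteq> {}" using th by (auto simp: A_def vec_eq_iff)
  have fA: "finite (f ` A)" "f ` A \<noteq> {}" using An by auto
  have f0: "0 \<le> f i" if "i \<in> A" for i using ray_char(1)[OF K, of "- (\<theta> $ i)"] that by (simp add: f_def A_def)
  have m0in: "m0 \<in> f ` A" unfolding m0_def using fA by (rule Min_in)
  have m0: "0 \<le> m0" using m0in f0 by auto
  have pw: "m0 powr real d = m0 ^ d"
  proof (cases "m0 = 0")
    case True then show ?thesis using d by simp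
  next
    case False then show ?thesis using m0 by (simp add: powr_realpow)
  qed
  have Rf: "Rq K x (- (\<theta> $ i)) = ennreal (f i)" if "i \<in> A" for i
    using Rq_eq[OF K, of "- (\<theta> $ i)"] that by (simp add: f_def A_def)
  have "ennreal m0 = (INF i. if \<theta>$i = 0 then \<infinity> else Rq K x (- (\<theta>$i)))"
  proof (rule antisym)
    show "ennreal m0 \<le> (INF i. if \<theta>$i = 0 then \<infinity> else Rq K x (- (\<theta>$i)))"
    proof (rule INF_greatest)
      fix i show "ennreal m0 \<le> (if \<theta>$i = 0 then \<infinity> else Rq K x (- (\<theta>$i)))"
      proof (cases "\<theta>$i = 0")
        case False
        then have iA: "i \<in> A" by (simp add: A_def)
        have "m0 \<le> f i" unfolding m0_def using fA iA by (intro Min_le) auto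
        then show ?thesis using False Rf[OF iA] by (simp add: ennreal_leI)
      qed simp
    qed
    from m0in obtain i0 where i0: "i0 \<in> A" "m0 = f i0" by auto
    have "(INF i. if \<theta>$i = 0 then \<infinity> else Rq K x (- (\<theta>$i))) \<le> (if \<theta>$i0 = 0 then \<infinity> else Rq K x (- (\<theta>$i0)))"
      by (rule INF_lower) simp
    also have "\<dots> = ennreal m0" using i0 Rf[OF i0(1)] by (simp add: A_def)
    finally show "(INF i. if \<theta>$i = 0 then \<infinity> else Rq K x (- (\<theta>$i))) \<le> ennreal m0" .
  qed
  then have "Psi K x \<theta> = ennreal m0 ^ d" by (simp add: Psi_def d_def)
  also have "\<dots> = ennreal (m0 powr real d)" using m0 by (simp add: pw ennreal_power)
  finally show ?thesis by (simp add: m0_def f_def A_def d_def)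
qed

lemma Psi_bound:
  fixes K :: "(real^'n) set" and \<theta> :: "real^'n^'m"
  assumes K: "compact K" "convex K" "x \<in> K" and i0: "\<theta> $ i0 \<noteq> 0"
    and B: "\<And>y. y \<in> K \<Longrightarrow> norm y \<le> B"
  shows "Psi K x \<theta> \<le> ennreal ((2 * B / norm (\<theta> $ i0)) ^ (CARD('n) * CARD('m)))"
proof -
  have ne: "- (\<theta> $ i0) \<noteq> 0" using i0 by simp
  have "(INF i. if \<theta>$i = 0 then \<infinity> else Rq K x (- (\<theta>$i))) \<le> (if \<theta>$i0 = 0 then \<infinity> else Rq K x (- (\<theta>$i0)))"
    by (rule INF_lower) simp
  also have "\<dots> = ennreal (radial_fun ((\<lambda>z. z - x) ` K) (- (\<theta> $ i0)))" using i0 Rq_eq[OF K ne] by simp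
  also have "\<dots> \<le> ennreal (2 * B / norm (\<theta> $ i0))"
    using radial_bound[OF K ne B] by (intro ennreal_leI) simp
  finally have "Psi K x \<theta> \<le> ennreal (2 * B / norm (\<theta> $ i0)) ^ (CARD('n) * CARD('m))"
    unfolding Psi_def by (rule power_mono) simp
  also have "\<dots> = ennreal ((2 * B / norm (\<theta> $ i0)) ^ (CARD('n) * CARD('m)))"
  proof -
    have "0 \<le> B" using B[OF K(3)] by (meson norm_ge_zero order_trans)
    then show ?thesis by (simp add: ennreal_power)
  qed
  finally show ?thesis .
qed


lemma powr_root_le_iff:
  fixes a q p :: real assumes "a \<ge> 0" "q \<ge> 0" "p > 0"
  shows "a \<le> q powr (1/p) \<longleftrightarrow> a powr p \<le> q"
proof
  assume "a \<le> q powr (1/p)"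
  then have "a powr p \<le> (q powr (1/p)) powr p" using assms by (intro powr_mono2) auto
  also have "\<dots> = q" using assms by (simp add: powr_powr)
  finally show "a powr p \<le> q" .
next
  assume h: "a powr p \<le> q"
  have "a = (a powr p) powr (1/p)" using assms by (simp add: powr_powr)
  also have "\<dots> \<le> q powr (1/p)" using assms h by (intro powr_mono2) auto
  finally show "a \<le> q powr (1/p)" .
qed

lemma vec_set_measure:
  fixes K :: "(real^'n) set"
  assumes Kb: "K \<in> sets borel" and x: "x \<in> K"
  shows "emeasure lborel {y::real^'n^'m. y \<noteq> 0 \<and> (\<forall>i. x - y$i \<in> K)} = emeasure lborel K ^ CARD('m)"
proof -
  define c :: "real^'n^'m" where "c = (\<chi> i. x)"
  define A where "A = {y::real^'n^'m. y \<noteq> 0 \<and> (\<forall>i. x - y$i \<in> K)}"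
  define P where "P = {y::real^'n^'m. \<forall>i. y$i \<in> K}"
  have Pb: "P \<in> sets borel"
  proof -
    have "P = (\<Inter>i. (\<lambda>y::real^'n^'m. y$i) -` K)" by (auto simp: P_def)
    also have "\<dots> \<in> sets borel"
      by (intro sets.countable_INT) (auto intro!: measurable_sets_borel[OF _ Kb] borel_measurable_continuous_onI continuous_intros)
    finally show ?thesis .
  qed
  have Ab: "A \<in> sets borel"
  proof -
    have "A = (\<lambda>y. c - y) -` P - {0}" by (auto simp: A_def P_def c_def)
    also have "\<dots> \<in> sets borel"
      by (intro sets.Diff measurable_sets_borel[OF _ Pb] borel_measurable_continuous_onI continuous_intros) auto
    finally show ?thesis .
  qed
  have T: "(\<lambda>z::real^'n^'m. c + (-1) *\<^sub>R z) \<in> borel \<rightarrow>\<^sub>M borel"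
    by (intro borel_measurable_continuous_onI continuous_intros)
  have "emeasure lborel A = emeasure (density (distr lborel borel (\<lambda>z. c + (-1) *\<^sub>R z)) (\<lambda>_. \<bar>-1::real\<bar> ^ DIM(real^'n^'m))) A"
    by (subst lborel_affine[of "-1" c, symmetric]) auto
  also have "\<dots> = emeasure (distr lborel borel (\<lambda>z. c + (-1) *\<^sub>R z)) A"
    by (simp add: density_1)
  also have "\<dots> = emeasure lborel ((\<lambda>z. c + (-1) *\<^sub>R z) -` A)"
    using emeasure_distr[OF _ Ab, of "\<lambda>z. c + (-1) *\<^sub>R z" lborel] T by simp
  also have "(\<lambda>z. c + (-1) *\<^sub>R z) -` A = P - {c}"
    by (auto simp: A_def P_def c_def vec_eq_iff) metis
  also have "emeasure lborel (P - {c}) = emeasure lborel P"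
    using Pb by (intro emeasure_Diff_null_set) auto
  also have "\<dots> = emeasure lborel K ^ CARD('m)"
    unfolding P_def by (rule emeasure_vec_prod[OF Kb])
  finally show ?thesis by (simp add: A_def)
qed

lemma integral_eq_Psi:
  fixes K :: "(real^'n) set" and \<theta> :: "real^'n^'m"
  assumes K: "compact K" "convex K" and th: "\<theta> \<noteq> 0"
  shows "(\<integral>\<^sup>+x. indicator K x * Psi K x \<theta> \<partial>lborel) < \<infinity>"
    and "integral K (\<lambda>x. (Min ((\<lambda>i. radial_fun ((\<lambda>z. z - x) ` K) (- (\<theta> $ i))) ` {i. \<theta> $ i \<noteq> 0}))
            powr real (CARD('n) * CARD('m)))
         = enn2real (\<integral>\<^sup>+x. indicator K x * Psi K x \<theta> \<partial>lborel)"
proof -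
  have Kc: "closed K" using K(1) by (rule compact_imp_closed)
  have Kb: "K \<in> sets borel" using Kc by (rule borel_closed)
  obtain B where B: "\<And>y. y \<in> K \<Longrightarrow> norm y \<le> B"
    using compact_imp_bounded[OF K(1)] by (auto simp: bounded_iff)
  obtain i0 where i0: "\<theta> $ i0 \<noteq> 0" using th by (auto simp: vec_eq_iff)
  define C where "C = (2 * B / norm (\<theta> $ i0)) ^ (CARD('n) * CARD('m))"
  define J where "J = (\<integral>\<^sup>+x. indicator K x * Psi K x \<theta> \<partial>lborel)"
  define h where "h x = (Min ((\<lambda>i. radial_fun ((\<lambda>z. z - x) ` K) (- (\<theta> $ i))) ` {i. \<theta> $ i \<noteq> 0}))
            powr real (CARD('n) * CARD('m))" for x
  have PM: "(\<lambda>x. Psi K x \<theta>) \<in> borel_measurable borel"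
    using Psi_meas[OF Kc, of "\<lambda>x. x" "\<lambda>_. \<theta>"] by (simp add: continuous_on_id continuous_on_const)
  have IM: "(\<lambda>x. indicator K x * Psi K x \<theta>) \<in> borel_measurable borel"
    using PM Kb by (intro borel_measurable_times_ennreal borel_measurable_indicator) auto
  have "J \<le> (\<integral>\<^sup>+x. ennreal C * indicator K x \<partial>lborel)"
    unfolding J_def
  proof (rule nn_integral_mono)
    fix x show "indicator K x * Psi K x \<theta> \<le> ennreal C * indicator K x"
      using Psi_bound[OF K _ i0 B, of x] by (cases "x \<in> K") (auto simp: C_def)
  qed
  also have "\<dots> = ennreal C * emeasure lborel K" using Kb by (simp add: nn_integral_cmult_indicator)
  also have "\<dots> < \<infinity>" using emeasure_compact_finite[OF K(1)] by (simp add: ennreal_mult_less_top)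
  finally have Jf: "J < \<infinity>" .
  then show "(\<integral>\<^sup>+x. indicator K x * Psi K x \<theta> \<partial>lborel) < \<infinity>" by (simp add: J_def)
  have h0: "0 \<le> h x" for x by (simp add: h_def)
  have hP: "x \<in> K \<Longrightarrow> ennreal (h x) = Psi K x \<theta>" for x
    unfolding h_def using Min_powr_eq[OF K _ th] by simp
  define g where "g x = indicator K x * h x" for x
  have g_eq: "g x = enn2real (indicator K x * Psi K x \<theta>)" for x
    by (cases "x \<in> K") (auto simp: g_def hP[symmetric] h0)
  have gM: "g \<in> borel_measurable borel"
    unfolding g_eq[abs_def] using IM by (rule borel_measurable_enn2real)
  have gI: "(\<integral>\<^sup>+x. ennreal (g x) \<partial>lborel) = ennreal (enn2real J)"
  proof -
    have "(\<integral>\<^sup>+x. ennreal (g x) \<partial>lborel) = J"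
      unfolding J_def by (intro nn_integral_cong) (auto simp: g_def hP split: split_indicator)
    then show ?thesis using Jf by simp
  qed
  have "(g has_integral enn2real J) UNIV"
    by (rule nn_integral_has_integral[OF gM _ gI]) (auto simp: g_def h0)
  moreover have "g = (\<lambda>x. if x \<in> K then h x else 0)" by (auto simp: g_def fun_eq_iff)
  ultimately have "(h has_integral enn2real J) K" by (simp add: has_integral_restrict_UNIV)
  then show "integral K h = enn2real (\<integral>\<^sup>+x. indicator K x * Psi K x \<theta> \<partial>lborel)"
    by (simp add: integral_unique J_def)
qed


theorem proposition5p3:
  fixes K :: "(real^'n) set"
  assumes "convex_body K"
  shows "measure lebesgue (Rmp (real (CARD('n) * CARD('m))) K :: (real^'n^'m) set)
           = measure lebesgue K ^ CARD('m)"
proof -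
  from assms have K: "compact K" "convex K" and intK: "interior K \<noteq> {}" by (auto simp: convex_body_def)
  have Kc: "closed K" using K(1) by (rule compact_imp_closed)
  have Kb[measurable]: "K \<in> sets borel" using Kc by (rule borel_closed)
  define d where "d = CARD('n) * CARD('m)"
  have d0: "d > 0" by (simp add: d_def)
  have DIMd: "DIM(real^'n^'m) = d" by (simp add: d_def)
  define V where "V = measure lebesgue K"
  have eK: "emeasure lborel K = emeasure lebesgue K" using Kb by simp
  have Kfin: "emeasure lborel K < \<infinity>" using emeasure_compact_finite[OF K(1)] .
  have mK: "measure lebesgue K = measure lborel K" using Kb by simp
  have eV: "emeasure lborel K = ennreal V"
    unfolding V_def mK by (rule emeasure_eq_ennreal_measure) (use Kfin in simp)
  have Vpos: "V > 0"
  proof -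
    have "\<not> negligible (interior K)" using intK by (simp add: open_not_negligible)
    then have "\<not> negligible K" using interior_subset negligible_subset by blast
    then have "K \<notin> null_sets lebesgue" by (simp add: negligible_iff_null_sets)
    moreover have "K \<in> sets lebesgue" using Kb by simp
    ultimately have "emeasure lebesgue K \<noteq> 0" using null_setsI[of lebesgue K] by blast
    then have "emeasure lborel K \<noteq> 0" using eK by metis
    then have "V \<noteq> 0" using eV by auto
    then show ?thesis using measure_nonneg[of lebesgue K] by (simp add: V_def order_less_le)
  qed
  define F where "F y = (\<integral>\<^sup>+x. indicator K x * Psi K x y \<partial>lborel)" for y :: "real^'n^'m"
  define \<Phi> where "\<Phi> y = ennreal (1 / V) * F y" for y :: "real^'n^'m"
  define W where "W = {y::real^'n^'m. 1 \<le> norm y ^ DIM(real^'n^'m) \<and> norm y ^ DIM(real^'n^'m) \<le> exp 1}"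
  have Wb[measurable]: "W \<in> sets borel" unfolding W_def by measurable
  have PsiM1[measurable]: "(\<lambda>p. Psi K (fst p) (snd p)) \<in> borel_measurable (lborel \<Otimes>\<^sub>M (lborel :: (real^'n^'m) measure))"
    using Psi_meas[OF Kc, of fst snd] by (simp add: lborel_prod continuous_on_fst continuous_on_snd continuous_on_id)
  have PsiM2[measurable]: "(\<lambda>p. Psi K (snd p) (fst p)) \<in> borel_measurable ((lborel :: (real^'n^'m) measure) \<Otimes>\<^sub>M lborel)"
    using Psi_meas[OF Kc, of snd fst] by (simp add: lborel_prod continuous_on_fst continuous_on_snd continuous_on_id)
  have PsiMx: "(\<lambda>y. Psi K x y) \<in> borel_measurable borel" for x
    using Psi_meas[OF Kc, of "\<lambda>_. x" "\<lambda>y. y"] by (simp add: continuous_on_id continuous_on_const)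
  have PsiMy: "(\<lambda>x. Psi K x y) \<in> borel_measurable borel" for y
    using Psi_meas[OF Kc, of "\<lambda>x. x" "\<lambda>_. y"] by (simp add: continuous_on_id continuous_on_const)
  have FM: "F \<in> borel_measurable borel"
  proof -
    have "(\<lambda>y. \<integral>\<^sup>+x. indicator K x * Psi K x y \<partial>lborel) \<in> borel_measurable (lborel :: (real^'n^'m) measure)"
      by (rule lborel.borel_measurable_nn_integral) (unfold case_prod_beta', measurable)
    then show ?thesis by (simp add: F_def[abs_def])
  qed
  have \<Phi>M: "\<Phi> \<in> borel_measurable borel"
    unfolding \<Phi>_def[abs_def] using FM by (intro borel_measurable_times_ennreal) auto
  have F_hom: "F y = ennreal (s ^ d) * F (s *\<^sub>R y)" if s: "s > 0" for s and y :: "real^'n^'m"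
  proof -
    have "F y = (\<integral>\<^sup>+x. ennreal (s ^ d) * (indicator K x * Psi K x (s *\<^sub>R y)) \<partial>lborel)"
      unfolding F_def
    proof (rule nn_integral_cong)
      fix x show "indicator K x * Psi K x y = ennreal (s ^ d) * (indicator K x * Psi K x (s *\<^sub>R y))"
        using Psi_hom[OF K _ s, of x y] by (cases "x \<in> K") (auto simp: d_def)
    qed
    also have "\<dots> = ennreal (s ^ d) * F (s *\<^sub>R y)"
      unfolding F_def by (rule nn_integral_cmult) (use PsiMy in measurable)
    finally show ?thesis .
  qed
  have \<Phi>_hom: "\<Phi> y = ennreal (s ^ DIM(real^'n^'m)) * \<Phi> (s *\<^sub>R y)" if "s > 0" "y \<noteq> 0" for s y
    unfolding \<Phi>_def DIMd using F_hom[OF that(1), of y] by (simp add: mult.left_commute)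
  define S where "S = {y::real^'n^'m. y \<noteq> 0 \<and> 1 \<le> \<Phi> y}"
  have main: "(\<integral>\<^sup>+y. \<Phi> y * indicator W y \<partial>lborel) = emeasure lborel S"
    unfolding W_def S_def by (rule homog_volume[OF \<Phi>M \<Phi>_hom])
  have inner: "(\<integral>\<^sup>+y. indicator K x * Psi K x y * indicator W y \<partial>lborel) = indicator K x * ennreal (V ^ CARD('m))" for x
  proof (cases "x \<in> K")
    case False then show ?thesis by simp
  next
    case True
    have hx: "Psi K x y = ennreal (s ^ DIM(real^'n^'m)) * Psi K x (s *\<^sub>R y)" if "s > 0" "y \<noteq> 0" for s and y :: "real^'n^'m"
      using Psi_hom[OF K True that(1), of y] DIMd by (simp add: d_def mult.commute)
    have "(\<integral>\<^sup>+y. indicator K x * Psi K x y * indicator W y \<partial>lborel) = (\<integral>\<^sup>+y. Psi K x y * indicator W y \<partial>lborel)"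
      using True by simp
    also have "\<dots> = emeasure lborel {y::real^'n^'m. y \<noteq> 0 \<and> 1 \<le> Psi K x y}"
      unfolding W_def by (rule homog_volume[OF PsiMx hx])
    also have "{y::real^'n^'m. y \<noteq> 0 \<and> 1 \<le> Psi K x y} = {y::real^'n^'m. y \<noteq> 0 \<and> (\<forall>i. x - y$i \<in> K)}"
      using Psi_char[OF K True] by blast
    also have "emeasure lborel \<dots> = emeasure lborel K ^ CARD('m)"
      by (rule vec_set_measure[OF Kb True])
    also have "\<dots> = ennreal (V ^ CARD('m))" using eV Vpos by (simp add: ennreal_power)
    finally show ?thesis using True by simp
  qed
  have lhs: "(\<integral>\<^sup>+y. \<Phi> y * indicator W y \<partial>lborel) = ennreal (V ^ CARD('m))"
  proof -
    have "(\<integral>\<^sup>+y. \<Phi> y * indicator W y \<partial>lborel)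
        = (\<integral>\<^sup>+y. ennreal (1 / V) * (\<integral>\<^sup>+x. indicator K x * Psi K x y * indicator W y \<partial>lborel) \<partial>lborel)"
    proof (rule nn_integral_cong)
      fix y :: "real^'n^'m"
      have "F y * indicator W y = (\<integral>\<^sup>+x. indicator K x * Psi K x y * indicator W y \<partial>lborel)"
        unfolding F_def by (rule nn_integral_multc[symmetric]) (use PsiMy in measurable)
      then show "\<Phi> y * indicator W y = ennreal (1 / V) * (\<integral>\<^sup>+x. indicator K x * Psi K x y * indicator W y \<partial>lborel)"
        by (simp add: \<Phi>_def mult.assoc)
    qed
    also have "\<dots> = ennreal (1 / V) * (\<integral>\<^sup>+y. (\<integral>\<^sup>+x. indicator K x * Psi K x y * indicator W y \<partial>lborel) \<partial>lborel)"
    proof (rule nn_integral_cmult)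
      show "(\<lambda>y. \<integral>\<^sup>+x. indicator K x * Psi K x y * indicator W y \<partial>lborel) \<in> borel_measurable (lborel :: (real^'n^'m) measure)"
        by (rule lborel.borel_measurable_nn_integral) (unfold case_prod_beta', measurable)
    qed
    also have "(\<integral>\<^sup>+y. (\<integral>\<^sup>+x. indicator K x * Psi K x y * indicator W y \<partial>lborel) \<partial>lborel)
        = (\<integral>\<^sup>+x. (\<integral>\<^sup>+y. indicator K x * Psi K x y * indicator W y \<partial>lborel) \<partial>lborel)"
      by (rule lborel_pair.Fubini') (unfold case_prod_beta', measurable)
    also have "\<dots> = (\<integral>\<^sup>+x. ennreal (V ^ CARD('m)) * indicator K x \<partial>lborel)"
      by (intro nn_integral_cong) (subst inner, rule mult.commute)
    also have "\<dots> = ennreal (V ^ CARD('m)) * ennreal V"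
      using Kb eV by (simp add: nn_integral_cmult_indicator)
    finally have "(\<integral>\<^sup>+y. \<Phi> y * indicator W y \<partial>lborel) = ennreal (1 / V) * (ennreal (V ^ CARD('m)) * ennreal V)" .
    also have "\<dots> = ennreal (1 / V * (V ^ CARD('m) * V))"
    proof -
      have e1: "ennreal (V ^ CARD('m)) * ennreal V = ennreal (V ^ CARD('m) * V)"
        using Vpos by (intro ennreal_mult[symmetric]) auto
      have e2: "ennreal (1 / V) * ennreal (V ^ CARD('m) * V) = ennreal (1 / V * (V ^ CARD('m) * V))"
        using Vpos by (intro ennreal_mult[symmetric]) auto
      show ?thesis by (simp only: e1 e2)
    qed
    also have "1 / V * (V ^ CARD('m) * V) = V ^ CARD('m)" using Vpos by simp
    finally show ?thesis .
  qed
  have Sb: "S \<in> sets borel"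
  proof -
    have "S = {y. y \<noteq> 0} \<inter> {y. 1 \<le> \<Phi> y}" by (auto simp: S_def)
    also have "\<dots> \<in> sets borel" using \<Phi>M by measurable
    finally show ?thesis .
  qed
  have z: "{0::real^'n^'m} \<in> sets borel" by simp
  have key: "norm z \<le> rho_Rmp (real (CARD('n) * CARD('m))) K ((1 / norm z) *\<^sub>R z) \<longleftrightarrow> 1 \<le> \<Phi> z"
    if z0: "z \<noteq> 0" for z :: "real^'n^'m"
  proof -
    define nz where "nz = norm z"
    have nz: "nz > 0" using z0 by (simp add: nz_def)
    define \<theta> where "\<theta> = (1 / nz) *\<^sub>R z"
    have th0: "\<theta> \<noteq> 0" using z0 nz by (simp add: \<theta>_def)
    have Jf: "F \<theta> < \<infinity>" unfolding F_def by (rule integral_eq_Psi(1)[OF K th0])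
    define Jr where "Jr = enn2real (F \<theta>)"
    have Jr0: "0 \<le> Jr" by (simp add: Jr_def)
    have FJ: "F \<theta> = ennreal Jr" using Jf by (simp add: Jr_def)
    have rho: "rho_Rmp (real (CARD('n) * CARD('m))) K \<theta> = ((1 / V) * Jr) powr (1 / real d)"
      unfolding rho_Rmp_def V_def[symmetric] integral_eq_Psi(2)[OF K th0] Jr_def F_def d_def ..
    have "F z = ennreal ((1 / nz) ^ d) * F \<theta>"
      unfolding \<theta>_def by (rule F_hom) (use nz in simp)
    then have "\<Phi> z = ennreal (1 / V) * (ennreal ((1 / nz) ^ d) * ennreal Jr)"
      by (simp add: \<Phi>_def FJ)
    also have "\<dots> = ennreal (1 / V * ((1 / nz) ^ d * Jr))"
    proof -
      have e1: "ennreal ((1 / nz) ^ d) * ennreal Jr = ennreal ((1 / nz) ^ d * Jr)"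
        using nz Jr0 by (intro ennreal_mult[symmetric]) auto
      have e2: "ennreal (1 / V) * ennreal ((1 / nz) ^ d * Jr) = ennreal (1 / V * ((1 / nz) ^ d * Jr))"
        using Vpos nz Jr0 by (intro ennreal_mult[symmetric]) auto
      show ?thesis by (simp only: e1 e2)
    qed
    finally have \<Phi>z: "\<Phi> z = ennreal (1 / V * ((1 / nz) ^ d * Jr))" .
    have "1 \<le> \<Phi> z \<longleftrightarrow> 1 \<le> 1 / V * ((1 / nz) ^ d * Jr)"
      unfolding \<Phi>z using ennreal_le_iff[of "1 / V * ((1 / nz) ^ d * Jr)" 1] Vpos nz Jr0 by simp
    also have "\<dots> \<longleftrightarrow> nz ^ d \<le> 1 / V * Jr"
      using Vpos nz by (simp add: field_simps power_divide)
    finally have c1: "1 \<le> \<Phi> z \<longleftrightarrow> nz ^ d \<le> 1 / V * Jr" .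
    have "nz \<le> rho_Rmp (real (CARD('n) * CARD('m))) K \<theta> \<longleftrightarrow> nz powr real d \<le> 1 / V * Jr"
      unfolding rho using Vpos nz Jr0 d0 by (intro powr_root_le_iff) auto
    also have "nz powr real d = nz ^ d" using nz by (simp add: powr_realpow)
    finally show ?thesis using c1 by (simp add: nz_def \<theta>_def)
  qed
  have Rmp_eq: "Rmp (real (CARD('n) * CARD('m))) K = insert 0 S"
  proof (rule set_eqI)
    fix w :: "real^'n^'m"
    show "w \<in> Rmp (real (CARD('n) * CARD('m))) K \<longleftrightarrow> w \<in> insert 0 S"
    proof
      assume "w \<in> Rmp (real (CARD('n) * CARD('m))) K"
      then obtain r \<theta> where w: "w = r *\<^sub>R \<theta>" "norm \<theta> = 1" "0 \<le> r" "r \<le> rho_Rmp (real (CARD('n) * CARD('m))) K \<theta>"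
        unfolding Rmp_def by blast
      show "w \<in> insert 0 S"
      proof (cases "r = 0")
        case True then show ?thesis using w by simp
      next
        case False
        then have r: "r > 0" using w by simp
        have nw: "norm w = r" using w r by simp
        have w0: "w \<noteq> 0" using nw r by auto
        have th: "(1 / norm w) *\<^sub>R w = \<theta>" using w r nw by simp
        have "1 \<le> \<Phi> w" using key[OF w0] w(4) nw th by simp
        then show ?thesis using w0 by (simp add: S_def)
      qed
    next
      assume "w \<in> insert 0 S"
      then consider "w = 0" | "w \<in> S" by blast
      then show "w \<in> Rmp (real (CARD('n) * CARD('m))) K"
      proof cases
        case 1
        obtain b :: "real^'n^'m" where b: "b \<in> Basis" using nonempty_Basis by blast
        have "norm b = 1" using b by (simp add: norm_Basis)
        moreover have "0 \<le> rho_Rmp (real (CARD('n) * CARD('m))) K b" by (simp add: rho_Rmp_def)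
        ultimately show ?thesis unfolding Rmp_def using 1
          by (intro CollectI exI[of _ 0] exI[of _ b]) simp
      next
        case 2
        then have w0: "w \<noteq> 0" and \<Phi>w: "1 \<le> \<Phi> w" by (auto simp: S_def)
        have "norm w \<le> rho_Rmp (real (CARD('n) * CARD('m))) K ((1 / norm w) *\<^sub>R w)"
          using key[OF w0] \<Phi>w by simp
        moreover have "norm ((1 / norm w) *\<^sub>R w) = 1" using w0 by simp
        moreover have "w = norm w *\<^sub>R ((1 / norm w) *\<^sub>R w)" using w0 by simp
        ultimately show ?thesis unfolding Rmp_def
          by (intro CollectI exI[of _ "norm w"] exI[of _ "(1 / norm w) *\<^sub>R w"]) simp
      qed
    qed
  qed
  have "emeasure lebesgue (Rmp (real (CARD('n) * CARD('m))) K :: (real^'n^'m) set) = emeasure lborel (insert 0 S)"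
  proof -
    have "insert 0 S \<in> sets borel" using sets.Un[OF z Sb] by simp
    then have ib: "insert 0 S \<in> sets lborel" by simp
    have "emeasure lebesgue (insert 0 S) = emeasure lborel (main_part lborel (insert 0 S))"
      by (rule emeasure_completion) (rule sets_completionI_sets[OF ib])
    also have "main_part lborel (insert 0 S) = insert 0 S" by (rule main_part[OF ib])
    finally show ?thesis unfolding Rmp_eq .
  qed
  also have "\<dots> = emeasure lborel S"
  proof -
    have z': "{0::real^'n^'m} \<in> sets lborel" using z by simp
    have "S \<in> sets lborel" using Sb by simp
    moreover have "(0::real^'n^'m) \<notin> S" by (simp add: S_def)
    ultimately have "emeasure lborel (insert 0 S) = emeasure lborel {0::real^'n^'m} + emeasure lborel S"
        by (rule emeasure_insert[OF z'])
    then show ?thesis by simp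
  qed
  also have "\<dots> = ennreal (V ^ CARD('m))" using main lhs by simp
  finally have fin: "emeasure lebesgue (Rmp (real (CARD('n) * CARD('m))) K :: (real^'n^'m) set) = ennreal (V ^ CARD('m))" .
  have "measure lebesgue (Rmp (real (CARD('n) * CARD('m))) K :: (real^'n^'m) set) = V ^ CARD('m)"
    unfolding measure_def fin using Vpos by simp
  then show ?thesis unfolding V_def .
qed


end
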